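(* Let $\omega_1(n),\omega_2(n)\to+\infty$. If \[\frac{\log(n)+\log(\log(n))+\omega_1(n)}{n}<p<1-\frac{\log(n)+\log(\log(n))+\omega_2(n)}{n},\] then a.a.s. $\Gamma\in G(n,p)$ has no domination pairs.
   Context: $G(n,p)$ is the Erdős–Rényi random graph on $n$ vertices with each edge present independently with probability $p=p(n)$; a.a.s. means with probability tending to $1$; $\log$ is natural logarithm. For distinct vertices $a,b$, $(a,b)$ is a domination pair if every vertex adjacent to $b$ is adjacent to or equal to $a$. *)

theory Defs
  imports Complex_Main
begin

text \<open>Vertex set of G(n,p) is {0..<n}; a graph is a set of edges, each edge a 2-element set.\<close>

definition all_edges :: "nat \<Rightarrow> nat set set" where
  "all_edges n = {{u, v} | u v. u < n \<and> v < n \<and> u \<noteq> v}"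

definition gnp_weight :: "nat \<Rightarrow> real \<Rightarrow> nat set set \<Rightarrow> real" where
  "gnp_weight n p E = p ^ card E * (1 - p) ^ (card (all_edges n) - card E)"

definition gnp_prob :: "nat \<Rightarrow> real \<Rightarrow> (nat set set \<Rightarrow> bool) \<Rightarrow> real" where
  "gnp_prob n p P = (\<Sum>E\<in>{E. E \<subseteq> all_edges n \<and> P E}. gnp_weight n p E)"

definition domination_pair :: "nat \<Rightarrow> nat set set \<Rightarrow> nat \<Rightarrow> nat \<Rightarrow> bool" where
  "domination_pair n E a b \<longleftrightarrow> a < n \<and> b < n \<and> a \<noteq> b \<and>
     (\<forall>v<n. {v, b} \<in> E \<longrightarrow> ({v, a} \<in> E \<or> v = a))"

definition has_domination_pair :: "nat \<Rightarrow> nat set set \<Rightarrow> bool" where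
  "has_domination_pair n E \<longleftrightarrow> (\<exists>a b. domination_pair n E a b)"

end

theory Submission
  imports Defs "HOL-Real_Asymp.Real_Asymp"
begin


definition cyl :: "nat set set \<Rightarrow> nat set set \<Rightarrow> nat set set \<Rightarrow> bool" where
  "cyl S T E \<longleftrightarrow> S \<subseteq> E \<and> E \<inter> T = {}"

lemma finite_all_edges: "finite (all_edges n)"
proof -
  have "all_edges n \<subseteq> (\<lambda>(u,v). {u,v}) ` ({..<n} \<times> {..<n})"
    unfolding all_edges_def by auto
  then show ?thesis by (rule finite_subset) auto
qed

lemma gnp_weight_nonneg: "0 \<le> p \<Longrightarrow> p \<le> 1 \<Longrightarrow> 0 \<le> gnp_weight n p E"
  unfolding gnp_weight_def by simp

lemma sum_pow_split:
  fixes p :: real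
  assumes "finite R"
  shows "(\<Sum>F\<in>Pow R. p ^ card F * (1-p) ^ (card R - card F)) = 1"
proof -
  have "(\<Prod>x\<in>R. p + (1-p)) = (\<Sum>F\<in>Pow R. (\<Prod>x\<in>F. p) * (\<Prod>x\<in>R-F. 1-p))"
    by (rule prod_add[OF assms])
  also have "\<dots> = (\<Sum>F\<in>Pow R. p ^ card F * (1-p) ^ (card R - card F))"
    apply (rule sum.cong, simp)
    using assms by (simp add: card_Diff_subset finite_subset)
  finally show ?thesis by simp
qed

lemma cyl_prob:
  assumes "S \<subseteq> all_edges n" "T \<subseteq> all_edges n" "S \<inter> T = {}"
  shows "gnp_prob n p (cyl S T) = p ^ card S * (1-p) ^ card T"
proof -
  define A where "A = all_edges n"
  define R where "R = A - S - T"
  have fA: "finite A" unfolding A_def by (rule finite_all_edges)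
  have fS: "finite S" "finite T" "finite R" using assms fA finite_subset unfolding A_def R_def by auto
  have cardA: "card A = card S + card T + card R"
  proof -
    have T1: "T \<subseteq> A - S" using assms unfolding A_def by auto
    have "card R = card (A - S) - card T" unfolding R_def using T1 fS fA
      by (simp add: card_Diff_subset finite_subset)
    moreover have "card (A - S) = card A - card S" using assms fS unfolding A_def
      by (simp add: card_Diff_subset)
    moreover have "card T \<le> card (A - S)" using T1 fA by (simp add: card_mono)
    moreover have "card S \<le> card A" using assms fA unfolding A_def by (simp add: card_mono)
    ultimately show ?thesis by linarith
  qed
  have eq: "{E. E \<subseteq> A \<and> cyl S T E} = (\<lambda>F. S \<union> F) ` Pow R"
    unfolding cyl_def R_def using assms unfolding A_def by (auto intro!: image_eqI[where x="_ - S"])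
  have inj: "inj_on (\<lambda>F. S \<union> F) (Pow R)"
    unfolding R_def inj_on_def by blast
  have "gnp_prob n p (cyl S T) = (\<Sum>F\<in>Pow R. gnp_weight n p (S \<union> F))"
    unfolding gnp_prob_def A_def[symmetric] eq by (simp add: sum.reindex[OF inj])
  also have "\<dots> = (\<Sum>F\<in>Pow R. (p ^ card S * (1-p) ^ card T) * (p ^ card F * (1-p) ^ (card R - card F)))"
  proof (rule sum.cong, simp)
    fix F assume F: "F \<in> Pow R"
    have fF: "finite F" using F fS finite_subset by auto
    have d: "S \<inter> F = {}" using F unfolding R_def by auto
    have cF: "card F \<le> card R" using F fS by (simp add: card_mono)
    have c: "card (S \<union> F) = card S + card F" using d fF fS by (simp add: card_Un_disjoint)
    show "gnp_weight n p (S \<union> F) = (p ^ card S * (1-p) ^ card T) * (p ^ card F * (1-p) ^ (card R - card F))"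
      unfolding gnp_weight_def A_def[symmetric] c cardA
      using cF by (simp add: power_add algebra_simps flip: power_add)
  qed
  also have "\<dots> = p ^ card S * (1-p) ^ card T"
    by (simp add: sum_distrib_left[symmetric] sum_pow_split fS)
  finally show ?thesis .
qed

lemma gnp_prob_nonneg: "0 \<le> p \<Longrightarrow> p \<le> 1 \<Longrightarrow> 0 \<le> gnp_prob n p P"
  unfolding gnp_prob_def by (rule sum_nonneg) (simp add: gnp_weight_nonneg)

lemma finite_gnp_set: "finite {E. E \<subseteq> all_edges n \<and> P E}"
  using finite_all_edges by (rule rev_finite_subset[OF finite_Pow_iff[THEN iffD2]]) auto

lemma gnp_prob_mono:
  assumes "\<And>E. E \<subseteq> all_edges n \<Longrightarrow> P E \<Longrightarrow> Q E" "0 \<le> p" "p \<le> 1"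
  shows "gnp_prob n p P \<le> gnp_prob n p Q"
  unfolding gnp_prob_def
  by (rule sum_mono2[OF finite_gnp_set]) (use assms in \<open>auto simp: gnp_weight_nonneg\<close>)

lemma gnp_prob_disj:
  assumes "0 \<le> p" "p \<le> 1"
  shows "gnp_prob n p (\<lambda>E. P E \<or> Q E) \<le> gnp_prob n p P + gnp_prob n p Q"
proof -
  have eq: "{E. E \<subseteq> all_edges n \<and> (P E \<or> Q E)} =
      {E. E \<subseteq> all_edges n \<and> P E} \<union> {E. E \<subseteq> all_edges n \<and> Q E}" by auto
  have "gnp_prob n p (\<lambda>E. P E \<or> Q E) = gnp_prob n p P + gnp_prob n p Q
     - (\<Sum>E\<in>{E. E \<subseteq> all_edges n \<and> P E} \<inter> {E. E \<subseteq> all_edges n \<and> Q E}. gnp_weight n p E)"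
    unfolding gnp_prob_def eq by (rule sum_Un[OF finite_gnp_set finite_gnp_set])
  moreover have "0 \<le> (\<Sum>E\<in>{E. E \<subseteq> all_edges n \<and> P E} \<inter> {E. E \<subseteq> all_edges n \<and> Q E}. gnp_weight n p E)"
    by (rule sum_nonneg) (simp add: assms gnp_weight_nonneg)
  ultimately show ?thesis by linarith
qed

lemma gnp_prob_False: "gnp_prob n p (\<lambda>E. False) = 0"
  unfolding gnp_prob_def by simp

lemma gnp_prob_Ex:
  assumes "finite I" "0 \<le> p" "p \<le> 1"
  shows "gnp_prob n p (\<lambda>E. \<exists>i\<in>I. Q i E) \<le> (\<Sum>i\<in>I. gnp_prob n p (Q i))"
  using assms(1)
proof (induction I rule: finite_induct)
  case empty
  then show ?case by (simp add: gnp_prob_False)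
next
  case (insert j I)
  have "gnp_prob n p (\<lambda>E. \<exists>i\<in>insert j I. Q i E) = gnp_prob n p (\<lambda>E. Q j E \<or> (\<exists>i\<in>I. Q i E))"
    by simp
  also have "\<dots> \<le> gnp_prob n p (Q j) + gnp_prob n p (\<lambda>E. \<exists>i\<in>I. Q i E)"
    by (rule gnp_prob_disj[OF assms(2,3)])
  also have "\<dots> \<le> gnp_prob n p (Q j) + (\<Sum>i\<in>I. gnp_prob n p (Q i))"
    using insert.IH by simp
  finally show ?case using insert by simp
qed

lemma gnp_prob_True: "gnp_prob n p (\<lambda>E. True) = 1"
proof -
  have "gnp_prob n p (cyl {} {}) = 1" by (subst cyl_prob) auto
  moreover have "cyl {} {} = (\<lambda>E. True)" unfolding cyl_def by auto
  ultimately show ?thesis by simp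
qed

lemma gnp_prob_compl: "gnp_prob n p (\<lambda>E. \<not> P E) = 1 - gnp_prob n p P"
proof -
  have eq: "{E. E \<subseteq> all_edges n \<and> True} =
      {E. E \<subseteq> all_edges n \<and> \<not> P E} \<union> {E. E \<subseteq> all_edges n \<and> P E}" by auto
  have "gnp_prob n p (\<lambda>E. True) = gnp_prob n p (\<lambda>E. \<not> P E) + gnp_prob n p P"
    unfolding gnp_prob_def eq by (rule sum.union_disjoint[OF finite_gnp_set finite_gnp_set]) auto
  then show ?thesis using gnp_prob_True by simp
qed

lemma mem_all_edges: "{u, v} \<in> all_edges n \<longleftrightarrow> u < n \<and> v < n \<and> u \<noteq> v"
  unfolding all_edges_def by (auto simp: doubleton_eq_iff)

lemma dom_compl:
  assumes "E \<subseteq> all_edges n" "domination_pair n E a b"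
  shows "domination_pair n (all_edges n - E) b a"
proof -
  have ab: "a < n" "b < n" "a \<noteq> b" and H: "\<And>v. v < n \<Longrightarrow> {v, b} \<in> E \<Longrightarrow> {v, a} \<in> E \<or> v = a"
    using assms(2) unfolding domination_pair_def by auto
  have "{v, b} \<in> all_edges n - E \<or> v = b" if v: "v < n" "{v, a} \<in> all_edges n - E" for v
  proof (cases "v = b")
    case False
    have "v \<noteq> a" using v(2) by (simp add: mem_all_edges)
    then have "{v, b} \<notin> E" using H[OF v(1)] v(2) by auto
    moreover have "{v, b} \<in> all_edges n" using False v ab by (simp add: mem_all_edges)
    ultimately show ?thesis by auto
  qed simp
  then show ?thesis using ab unfolding domination_pair_def by auto
qed

lemma has_dom_compl:
  assumes "E \<subseteq> all_edges n"
  shows "has_domination_pair n (all_edges n - E) = has_domination_pair n E"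
proof -
  have "all_edges n - (all_edges n - E) = E" using assms by auto
  then show ?thesis unfolding has_domination_pair_def
    using dom_compl[OF assms] dom_compl[of "all_edges n - E" n] by fastforce
qed

lemma gnp_prob_sym:
  "gnp_prob n p (has_domination_pair n) = gnp_prob n (1-p) (has_domination_pair n)"
proof -
  define A where "A = all_edges n"
  have fA: "finite A" unfolding A_def by (rule finite_all_edges)
  have eq: "{E. E \<subseteq> A \<and> has_domination_pair n E} = (\<lambda>E. A - E) ` {E. E \<subseteq> A \<and> has_domination_pair n E}"
    using has_dom_compl unfolding A_def
    by (auto intro!: image_eqI[where x="all_edges n - _"])
  have inj: "inj_on (\<lambda>E. A - E) {E. E \<subseteq> A \<and> has_domination_pair n E}"
    unfolding inj_on_def by blast
  have "gnp_prob n (1-p) (has_domination_pair n) = (\<Sum>E\<in>{E. E \<subseteq> A \<and> has_domination_pair n E}. gnp_weight n (1-p) (A - E))"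
    unfolding gnp_prob_def A_def[symmetric] by (subst eq) (simp add: sum.reindex[OF inj])
  also have "\<dots> = (\<Sum>E\<in>{E. E \<subseteq> A \<and> has_domination_pair n E}. gnp_weight n p E)"
  proof (rule sum.cong, simp)
    fix E assume "E \<in> {E. E \<subseteq> A \<and> has_domination_pair n E}"
    then have E: "E \<subseteq> A" by auto
    have c: "card (A - E) = card A - card E" using E fA by (simp add: card_Diff_subset finite_subset)
    have "card E \<le> card A" using E fA by (simp add: card_mono)
    then show "gnp_weight n (1-p) (A - E) = gnp_weight n p E"
      unfolding gnp_weight_def A_def[symmetric] c by (simp add: mult.commute)
  qed
  finally show ?thesis unfolding gnp_prob_def A_def by simp
qed



definition star :: "nat \<Rightarrow> nat \<Rightarrow> nat set set" where
  "star n b = (\<lambda>v. {b,v}) ` {v. v < n \<and> v \<noteq> b}"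
definition W :: "nat \<Rightarrow> nat \<Rightarrow> nat \<Rightarrow> nat set" where
  "W n a b = {v. v < n \<and> v \<noteq> a \<and> v \<noteq> b}"
definition Sp :: "nat \<Rightarrow> nat \<Rightarrow> nat set \<Rightarrow> nat set set" where
  "Sp a b M = insert {a,b} ((\<lambda>v. {b,v}) ` M \<union> (\<lambda>v. {a,v}) ` M)"
definition Tp :: "nat \<Rightarrow> nat \<Rightarrow> nat \<Rightarrow> nat set \<Rightarrow> nat set set" where
  "Tp n a b M = (\<lambda>v. {b,v}) ` (W n a b - M)"
definition Sa :: "nat \<Rightarrow> nat \<Rightarrow> nat set \<Rightarrow> nat set set" where
  "Sa a b M = (\<lambda>v. {b,v}) ` M \<union> (\<lambda>v. {a,v}) ` M"
definition Ta :: "nat \<Rightarrow> nat \<Rightarrow> nat \<Rightarrow> nat set \<Rightarrow> nat set set" where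
  "Ta n a b M = insert {a,b} ((\<lambda>v. {b,v}) ` (W n a b - M))"
definition P2 :: "nat \<Rightarrow> (nat \<times> nat) set" where
  "P2 n = {(a,b). a < n \<and> b < n \<and> a \<noteq> b}"

lemma cover:
  assumes "E \<subseteq> all_edges n" "has_domination_pair n E"
  shows "(\<exists>b\<in>{..<n}. cyl {} (star n b) E) \<or>
         (\<exists>(b,c)\<in>P2 n. cyl {{b,c}} (star n b - {{b,c}}) E) \<or>
         (\<exists>(a,b)\<in>P2 n. (\<exists>M\<in>Pow (W n a b) - {{}}. cyl (Sp a b M) (Tp n a b M) E) \<or>
              (\<exists>M\<in>{M\<in>Pow (W n a b). 2 \<le> card M}. cyl (Sa a b M) (Ta n a b M) E))"
proof -
  obtain a b where ab: "a < n" "b < n" "a \<noteq> b" and H: "\<And>v. v < n \<Longrightarrow> {v, b} \<in> E \<Longrightarrow> {v, a} \<in> E \<or> v = a"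
    using assms(2) unfolding has_domination_pair_def domination_pair_def by blast
  have abP: "(a,b) \<in> P2 n" using ab by (simp add: P2_def)
  define M where "M = {v \<in> W n a b. {b,v} \<in> E}"
  have MW: "M \<in> Pow (W n a b)" unfolding M_def by auto
  have Ma: "{a,v} \<in> E" if "v \<in> M" for v
    using that H[of v] unfolding M_def W_def by (auto simp: insert_commute)
  have notM: "{b,v} \<notin> E" if "v \<in> W n a b" "v \<notin> M" for v
    using that unfolding M_def by auto
  have fM: "finite M" unfolding M_def W_def by auto
  show ?thesis
  proof (cases "M = {}")
    case True
    show ?thesis
    proof (cases "{a,b} \<in> E")
      case True2: True
      have "cyl {{b,a}} (star n b - {{b,a}}) E"
        unfolding cyl_def star_def using True2 notM True
        by (auto simp: insert_commute W_def)
      then have "\<exists>(b,c)\<in>P2 n. cyl {{b,c}} (star n b - {{b,c}}) E"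
        using ab by (auto simp: P2_def intro!: bexI[where x="(b,a)"])
      then show ?thesis by blast
    next
      case False2: False
      have "cyl {} (star n b) E"
        unfolding cyl_def star_def using False2 notM True
        by (auto simp: insert_commute W_def)
      then show ?thesis using ab by blast
    qed
  next
    case False
    show ?thesis
    proof (cases "{a,b} \<in> E")
      case True2: True
      have "cyl (Sp a b M) (Tp n a b M) E"
        unfolding cyl_def Sp_def Tp_def using True2 notM Ma
        by (auto simp: M_def)
      then show ?thesis using abP MW False by blast
    next
      case False2: False
      show ?thesis
      proof (cases "2 \<le> card M")
        case True
        have "cyl (Sa a b M) (Ta n a b M) E"
          unfolding cyl_def Sa_def Ta_def using False2 notM Ma
          by (auto simp: M_def)
        then show ?thesis using abP MW True by blast
      next
        case False3: False
        have "card M = 1" using False False3 card_0_eq[OF fM] by arith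
        then obtain c where c: "M = {c}" by (rule card_1_singletonE)
        have cW: "c \<in> W n a b" "{b,c} \<in> E" using c unfolding M_def by auto
        have "cyl {{b,c}} (star n b - {{b,c}}) E"
          unfolding cyl_def star_def using cW False2 notM c
          by (auto simp: insert_commute W_def)
        then have "\<exists>(b,c)\<in>P2 n. cyl {{b,c}} (star n b - {{b,c}}) E"
          using ab cW by (auto simp: P2_def W_def intro!: bexI[where x="(b,c)"])
        then show ?thesis by blast
      qed
    qed
  qed
qed



lemma sumA:
  fixes p :: real and X :: "nat set"
  assumes "finite X"
  shows "(\<Sum>M\<in>Pow X. p^(2*card M)*(1-p)^(card X - card M)) = (1-p+p^2)^card X"
proof -
  have "(\<Prod>x\<in>X. p^2 + (1-p)) = (\<Sum>M\<in>Pow X. (\<Prod>x\<in>M. p^2) * (\<Prod>x\<in>X-M. 1-p))"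
    by (rule prod_add[OF assms])
  also have "\<dots> = (\<Sum>M\<in>Pow X. p^(2*card M)*(1-p)^(card X - card M))"
    apply (rule sum.cong, simp)
    using assms by (simp add: card_Diff_subset finite_subset power_mult)
  finally show ?thesis by (simp add: add.commute add.left_commute)
qed

lemma sum3:
  fixes p :: real and X :: "nat set"
  assumes "finite X"
  shows "(\<Sum>M\<in>Pow X - {{}}. p^(2*card M+1)*(1-p)^(card X - card M)) = p*((1-p+p^2)^card X - (1-p)^card X)"
proof -
  have "(\<Sum>M\<in>Pow X. p^(2*card M)*(1-p)^(card X - card M)) =
        p^(2*card ({}::nat set))*(1-p)^(card X - card ({}::nat set)) + (\<Sum>M\<in>Pow X - {{}}. p^(2*card M)*(1-p)^(card X - card M))"
    by (rule sum.remove) (use assms in auto)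
  then have "(\<Sum>M\<in>Pow X - {{}}. p^(2*card M)*(1-p)^(card X - card M)) = (1-p+p^2)^card X - (1-p)^card X"
    using sumA[OF assms, of p] by simp
  then show ?thesis by (simp add: sum_distrib_left[symmetric] mult.assoc)
qed

lemma sum4:
  fixes p :: real and X :: "nat set"
  assumes "finite X"
  shows "(\<Sum>M\<in>{M\<in>Pow X. 2 \<le> card M}. p^(2*card M)*(1-p)^(card X - card M + 1)) =
     (1-p)*((1-p+p^2)^card X - (1-p)^card X - card X*p^2*(1-p)^(card X - 1))"
proof -
  define t where "t M = p^(2*card M)*(1-p)^(card X - card M)" for M :: "nat set"
  have split: "Pow X = {M\<in>Pow X. 2 \<le> card M} \<union> insert {} ((\<lambda>v. {v}) ` X)"
  proof -
    have "M \<in> insert {} ((\<lambda>v. {v}) ` X)" if "M \<in> Pow X" "\<not> 2 \<le> card M" for M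
    proof -
      have fM: "finite M" using that assms finite_subset by auto
      have "card M = 0 \<or> card M = 1" using that by arith
      then show ?thesis using fM that(1) by (auto simp: card_1_singleton_iff)
    qed
    then show ?thesis by auto
  qed
  have fin: "finite {M\<in>Pow X. 2 \<le> card M}" using assms by auto
  have "(\<Sum>M\<in>Pow X. t M) = (\<Sum>M\<in>{M\<in>Pow X. 2 \<le> card M}. t M) + (\<Sum>M\<in>insert {} ((\<lambda>v. {v}) ` X). t M)"
    by (subst split, rule sum.union_disjoint) (use assms in auto)
  moreover have "(\<Sum>M\<in>insert {} ((\<lambda>v. {v}) ` X). t M) = t {} + (\<Sum>M\<in>(\<lambda>v. {v}) ` X. t M)"
    by (rule sum.insert) (use assms in auto)
  moreover have "(\<Sum>M\<in>(\<lambda>v. {v}) ` X. t M) = (\<Sum>v\<in>X. t {v})"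
    by (subst sum.reindex) (auto simp: inj_on_def)
  moreover have "(\<Sum>v\<in>X. t {v}) = card X * p^2*(1-p)^(card X - 1)"
    by (simp add: t_def)
  moreover have "(\<Sum>M\<in>Pow X. t M) = (1-p+p^2)^card X" unfolding t_def by (rule sumA[OF assms])
  ultimately have "(\<Sum>M\<in>{M\<in>Pow X. 2 \<le> card M}. t M) = (1-p+p^2)^card X - (1-p)^card X - card X*p^2*(1-p)^(card X - 1)"
    by (simp add: t_def)
  moreover have "(\<Sum>M\<in>{M\<in>Pow X. 2 \<le> card M}. p^(2*card M)*(1-p)^(card X - card M + 1)) = (1-p) * (\<Sum>M\<in>{M\<in>Pow X. 2 \<le> card M}. t M)"
    unfolding t_def sum_distrib_left by (rule sum.cong) auto
  ultimately show ?thesis by simp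
qed



lemma card_img: "x \<notin> M \<Longrightarrow> card ((\<lambda>v. {x,v}) ` M) = card M"
  by (rule card_image) (auto simp: inj_on_def doubleton_eq_iff)

lemma fin_W: "finite (W n a b)" unfolding W_def by auto

lemma card_W: "(a,b) \<in> P2 n \<Longrightarrow> card (W n a b) = n - 2"
proof -
  assume "(a,b) \<in> P2 n"
  then have h: "a < n" "b < n" "a \<noteq> b" by (auto simp: P2_def)
  have "W n a b = {..<n} - {a,b}" unfolding W_def by auto
  moreover have "card ({..<n} - {a,b}) = n - 2" using h by (subst card_Diff_subset) auto
  ultimately show ?thesis by simp
qed

lemma star_sub: "star n b \<subseteq> all_edges n" if "b < n"
  using that unfolding star_def by (auto simp: mem_all_edges)

lemma card_star: "b < n \<Longrightarrow> card (star n b) = n - 1"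
proof -
  assume b: "b < n"
  have "card (star n b) = card {v. v < n \<and> v \<noteq> b}" unfolding star_def by (rule card_img) simp
  also have "{v. v < n \<and> v \<noteq> b} = {..<n} - {b}" by auto
  also have "card \<dots> = n - 1" using b by simp
  finally show ?thesis .
qed

lemma prob_E1: "b < n \<Longrightarrow> gnp_prob n p (cyl {} (star n b)) = (1-p)^(n-1)"
  by (subst cyl_prob) (auto simp: star_sub card_star)

lemma prob_E2: "(b,c) \<in> P2 n \<Longrightarrow> gnp_prob n p (cyl {{b,c}} (star n b - {{b,c}})) = p * (1-p)^(n-2)"
proof -
  assume h: "(b,c) \<in> P2 n"
  then have h': "b < n" "c < n" "b \<noteq> c" by (auto simp: P2_def)
  have m: "{b,c} \<in> star n b" using h' unfolding star_def by auto
  have "card (star n b - {{b,c}}) = n - 2" using m h' by (simp add: card_star finite_subset[OF star_sub finite_all_edges])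
  then show ?thesis using h' star_sub[OF h'(1)] by (subst cyl_prob) (auto simp: mem_all_edges)
qed

lemma prob_Sp: assumes "(a,b) \<in> P2 n" "M \<subseteq> W n a b"
  shows "gnp_prob n p (cyl (Sp a b M) (Tp n a b M)) = p^(2*card M+1) * (1-p)^(card (W n a b) - card M)"
proof -
  have h: "a < n" "b < n" "a \<noteq> b" using assms by (auto simp: P2_def)
  have fM: "finite M" using assms(2) fin_W finite_subset by blast
  have aM: "a \<notin> M" "b \<notin> M" using assms(2) unfolding W_def by auto
  have cD: "card (W n a b - M) = card (W n a b) - card M" using assms(2) fM by (simp add: card_Diff_subset)
  have d1: "(\<lambda>v. {b,v}) ` M \<inter> (\<lambda>v. {a,v}) ` M = {}" using aM h by (auto simp: doubleton_eq_iff)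
  have cS: "card (Sp a b M) = 2*card M + 1"
  proof -
    have "{a,b} \<notin> (\<lambda>v. {b,v}) ` M \<union> (\<lambda>v. {a,v}) ` M" using aM h by (auto simp: doubleton_eq_iff)
    then have "card (Sp a b M) = Suc (card ((\<lambda>v. {b,v}) ` M \<union> (\<lambda>v. {a,v}) ` M))"
      unfolding Sp_def using fM by simp
    also have "\<dots> = Suc (card M + card M)" using d1 fM aM by (simp add: card_Un_disjoint card_img)
    finally show ?thesis by simp
  qed
  have cT: "card (Tp n a b M) = card (W n a b) - card M"
    unfolding Tp_def by (subst card_img, simp add: W_def, rule cD)
  have sub: "Sp a b M \<subseteq> all_edges n" "Tp n a b M \<subseteq> all_edges n" "Sp a b M \<inter> Tp n a b M = {}"
    using assms(2) h unfolding Sp_def Tp_def W_def by (auto simp: mem_all_edges doubleton_eq_iff)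
  show ?thesis using sub cS cT by (simp add: cyl_prob)
qed

lemma prob_Sa: assumes "(a,b) \<in> P2 n" "M \<subseteq> W n a b"
  shows "gnp_prob n p (cyl (Sa a b M) (Ta n a b M)) = p^(2*card M) * (1-p)^(card (W n a b) - card M + 1)"
proof -
  have h: "a < n" "b < n" "a \<noteq> b" using assms by (auto simp: P2_def)
  have fM: "finite M" using assms(2) fin_W finite_subset by blast
  have aM: "a \<notin> M" "b \<notin> M" using assms(2) unfolding W_def by auto
  have cD: "card (W n a b - M) = card (W n a b) - card M" using assms(2) fM by (simp add: card_Diff_subset)
  have d1: "(\<lambda>v. {b,v}) ` M \<inter> (\<lambda>v. {a,v}) ` M = {}" using aM h by (auto simp: doubleton_eq_iff)
  have cS: "card (Sa a b M) = 2*card M"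
    unfolding Sa_def using d1 fM aM by (simp add: card_Un_disjoint card_img)
  have cT: "card (Ta n a b M) = card (W n a b) - card M + 1"
  proof -
    have "{a,b} \<notin> (\<lambda>v. {b,v}) ` (W n a b - M)" using h by (auto simp: doubleton_eq_iff W_def)
    then have "card (Ta n a b M) = Suc (card ((\<lambda>v. {b,v}) ` (W n a b - M)))"
      unfolding Ta_def using fin_W by simp
    also have "\<dots> = Suc (card (W n a b) - card M)"
      using card_img[of b "W n a b - M"] cD by (simp add: W_def)
    finally show ?thesis by simp
  qed
  have sub: "Sa a b M \<subseteq> all_edges n" "Ta n a b M \<subseteq> all_edges n" "Sa a b M \<inter> Ta n a b M = {}"
    using assms(2) h unfolding Sa_def Ta_def W_def by (auto simp: mem_all_edges doubleton_eq_iff)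
  show ?thesis using sub cS cT by (simp add: cyl_prob)
qed



lemma card_P2: "card (P2 n) \<le> n^2" and fin_P2: "finite (P2 n)"
proof -
  have s: "P2 n \<subseteq> {..<n} \<times> {..<n}" unfolding P2_def by auto
  show "finite (P2 n)" by (rule finite_subset[OF s]) auto
  have "card (P2 n) \<le> card ({..<n} \<times> {..<n})" by (rule card_mono[OF _ s]) auto
  then show "card (P2 n) \<le> n^2" by (simp add: power2_eq_square)
qed

lemma bad_bound:
  fixes p :: real
  assumes p: "0 \<le> p" "p \<le> 1" and n: "2 \<le> n"
  shows "gnp_prob n p (has_domination_pair n) \<le> n*(1-p)^(n-1) + n^2*(p*(1-p)^(n-2)) +
     n^2*(p*((1-p+p^2)^(n-2) - (1-p)^(n-2)) +
          (1-p)*((1-p+p^2)^(n-2) - (1-p)^(n-2) - real (n-2)*p^2*(1-p)^(n-2-1)))"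
proof -
  define c where "c = p*((1-p+p^2)^(n-2) - (1-p)^(n-2)) +
          (1-p)*((1-p+p^2)^(n-2) - (1-p)^(n-2) - real (n-2)*p^2*(1-p)^(n-2-1))"
  define D1 where "D1 = (\<lambda>E. \<exists>b\<in>{..<n}. cyl {} (star n b) E)"
  define D2 where "D2 = (\<lambda>E. \<exists>i\<in>P2 n. (case i of (b,c) \<Rightarrow> cyl {{b,c}} (star n b - {{b,c}}) E))"
  define G where "G = (\<lambda>i E. case i of (a,b) \<Rightarrow> (\<exists>M\<in>Pow (W n a b) - {{}}. cyl (Sp a b M) (Tp n a b M) E) \<or>
              (\<exists>M\<in>{M\<in>Pow (W n a b). 2 \<le> card M}. cyl (Sa a b M) (Ta n a b M) E))"
  define D3 where "D3 = (\<lambda>E. \<exists>i\<in>P2 n. G i E)"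
  have "gnp_prob n p (has_domination_pair n) \<le> gnp_prob n p (\<lambda>E. D1 E \<or> (D2 E \<or> D3 E))"
    by (rule gnp_prob_mono[OF _ p]) (use cover in \<open>simp add: D1_def D2_def D3_def G_def split_beta'\<close>)
  also have "\<dots> \<le> gnp_prob n p D1 + gnp_prob n p (\<lambda>E. D2 E \<or> D3 E)" by (rule gnp_prob_disj[OF p])
  also have "\<dots> \<le> gnp_prob n p D1 + (gnp_prob n p D2 + gnp_prob n p D3)"
    using gnp_prob_disj[OF p, of n D2 D3] by simp
  finally have 0: "gnp_prob n p (has_domination_pair n) \<le> gnp_prob n p D1 + (gnp_prob n p D2 + gnp_prob n p D3)" .
  have 1: "gnp_prob n p D1 \<le> n*(1-p)^(n-1)"
  proof -
    have "gnp_prob n p D1 \<le> (\<Sum>b\<in>{..<n}. gnp_prob n p (cyl {} (star n b)))"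
      unfolding D1_def by (rule gnp_prob_Ex[OF _ p]) simp
    also have "\<dots> = n*(1-p)^(n-1)" by (simp add: prob_E1)
    finally show ?thesis .
  qed
  have 2: "gnp_prob n p D2 \<le> n^2*(p*(1-p)^(n-2))"
  proof -
    have "gnp_prob n p D2 \<le> (\<Sum>i\<in>P2 n. gnp_prob n p (\<lambda>E. case i of (b,c) \<Rightarrow> cyl {{b,c}} (star n b - {{b,c}}) E))"
      unfolding D2_def by (rule gnp_prob_Ex[OF fin_P2 p])
    also have "\<dots> = (\<Sum>i\<in>P2 n. p*(1-p)^(n-2))"
      by (rule sum.cong) (auto simp: prob_E2[symmetric] split_beta')
    also have "\<dots> = card (P2 n) * (p*(1-p)^(n-2))" by simp
    also have "\<dots> \<le> n^2 * (p*(1-p)^(n-2))"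
      by (rule mult_right_mono) (use card_P2[of n] p in \<open>auto simp flip: of_nat_power\<close>)
    finally show ?thesis .
  qed
  have G: "gnp_prob n p (G i) \<le> c" if i: "i \<in> P2 n" for i
  proof -
    obtain a b where ab: "i = (a,b)" by fastforce
    have abP: "(a,b) \<in> P2 n" using i ab by simp
    have cW: "card (W n a b) = n - 2" by (rule card_W[OF abP])
    have "gnp_prob n p (G i) \<le> gnp_prob n p (\<lambda>E. \<exists>M\<in>Pow (W n a b) - {{}}. cyl (Sp a b M) (Tp n a b M) E) +
        gnp_prob n p (\<lambda>E. \<exists>M\<in>{M\<in>Pow (W n a b). 2 \<le> card M}. cyl (Sa a b M) (Ta n a b M) E)"
      unfolding G_def ab by (simp add: gnp_prob_disj[OF p])
    also have "\<dots> \<le> (\<Sum>M\<in>Pow (W n a b) - {{}}. gnp_prob n p (cyl (Sp a b M) (Tp n a b M))) +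
        (\<Sum>M\<in>{M\<in>Pow (W n a b). 2 \<le> card M}. gnp_prob n p (cyl (Sa a b M) (Ta n a b M)))"
      by (intro add_mono gnp_prob_Ex[OF _ p]) (auto simp: fin_W)
    also have "\<dots> = (\<Sum>M\<in>Pow (W n a b) - {{}}. p^(2*card M+1) * (1-p)^(card (W n a b) - card M)) +
        (\<Sum>M\<in>{M\<in>Pow (W n a b). 2 \<le> card M}. p^(2*card M) * (1-p)^(card (W n a b) - card M + 1))"
      by (intro arg_cong2[where f="(+)"] sum.cong) (auto simp: prob_Sp[OF abP] prob_Sa[OF abP])
    also have "\<dots> = c" using sum3[OF fin_W, of p n a b] sum4[OF fin_W, of p n a b] unfolding cW c_def by simp
    finally show ?thesis .
  qed
  have P2ne: "(0,1) \<in> P2 n" using n by (simp add: P2_def)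
  have cnn: "0 \<le> c" using G[OF P2ne] gnp_prob_nonneg[OF p, of n "G (0,1)"] by linarith
  have 3: "gnp_prob n p D3 \<le> n^2 * c"
  proof -
    have "gnp_prob n p D3 \<le> (\<Sum>i\<in>P2 n. gnp_prob n p (G i))"
      unfolding D3_def by (rule gnp_prob_Ex[OF fin_P2 p])
    also have "\<dots> \<le> (\<Sum>i\<in>P2 n. c)" by (rule sum_mono) (rule G)
    also have "\<dots> = card (P2 n) * c" by simp
    also have "\<dots> \<le> n^2 * c"
      by (rule mult_right_mono) (use card_P2[of n] cnn in \<open>auto simp flip: of_nat_power\<close>)
    finally show ?thesis .
  qed
  show ?thesis using 0 1 2 3 unfolding c_def of_nat_power by linarith
qed



lemma pow_exp_bound: "(1 + y) ^ k \<le> exp (real k * y)" if "0 \<le> 1 + (y::real)"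
proof -
  have "(1 + y) ^ k \<le> exp y ^ k" by (rule power_mono) (use that exp_ge_add_one_self in auto)
  also have "\<dots> = exp (real k * y)" by (simp add: exp_of_nat_mult)
  finally show ?thesis .
qed

lemma H3: "(1 + y) ^ m - 1 \<le> real m * y * (1 + y) ^ m" if "0 \<le> (y::real)"
proof (induction m)
  case 0 then show ?case by simp
next
  case (Suc m)
  have p1: "1 \<le> (1+y)^m" using that by (simp add: one_le_power)
  have "(1 + y) ^ Suc m - 1 = (1+y)*((1+y)^m - 1) + y" by (simp add: algebra_simps)
  also have "\<dots> \<le> (1+y)*(real m * y * (1 + y) ^ m) + y"
    using Suc that by (intro add_right_mono mult_left_mono) auto
  also have "\<dots> \<le> real (Suc m) * y * (1 + y) ^ Suc m"
  proof -
    have p1': "1 \<le> (1+y)^Suc m" by (rule one_le_power) (use that in simp)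
    have "y * 1 \<le> y * (1+y)^Suc m" by (rule mult_left_mono[OF p1' that])
    then show ?thesis by (simp add: algebra_simps)
  qed
  finally show ?case .
qed

lemma H4: "(1 + y) ^ m - 1 - real m * y \<le> (real m * y)^2 * (1 + y) ^ m" if "0 \<le> (y::real)"
proof (induction m)
  case 0 then show ?case by simp
next
  case (Suc m)
  have p1: "1 \<le> (1+y)^Suc m" by (rule one_le_power) (use that in simp)
  have "(1 + y) ^ Suc m - 1 - real (Suc m) * y = (1+y)*((1+y)^m - 1 - real m * y) + real m * y^2"
    by (simp add: algebra_simps power2_eq_square)
  also have "\<dots> \<le> (1+y)*((real m * y)^2 * (1 + y) ^ m) + real m * y^2"
    using Suc that by (intro add_right_mono mult_left_mono) auto
  also have "\<dots> \<le> (real (Suc m) * y)^2 * (1 + y) ^ Suc m"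
  proof -
    have a: "real m * y^2 \<le> (2 * real m + 1) * y^2 * (1+y)^Suc m"
    proof -
      have "real m * y^2 \<le> (2*real m+1)*y^2" by (intro mult_right_mono) auto
      also have "\<dots> = (2*real m+1)*y^2 * 1" by simp
      also have "\<dots> \<le> (2*real m+1)*y^2 * (1+y)^Suc m" by (rule mult_left_mono[OF p1]) simp
      finally show ?thesis .
    qed
    have "(real (Suc m) * y)^2 * (1 + y) ^ Suc m = (1+y)*((real m * y)^2 * (1 + y) ^ m) + (2 * real m + 1) * y^2 * (1+y)^Suc m"
      by (simp add: algebra_simps power2_eq_square)
    then show ?thesis using a by linarith
  qed
  finally show ?case .
qed

lemma H1: "(1 - p) ^ k \<le> exp (- (p * real k))" if "0 \<le> p" "p \<le> (1::real)"
  using pow_exp_bound[of "-p" k] that by (simp add: mult.commute)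



lemma key:
  fixes p w :: real and n :: nat
  assumes n3: "3 \<le> n" and p: "0 < p" "p \<le> 1/2"
    and L1: "1 \<le> ln (real n)" and big: "72 * ln (real n)^2 \<le> real n"
    and x: "ln (real n) + ln (ln (real n)) + w \<le> real n * p" and w: "0 \<le> w"
  shows "n*(1-p)^(n-1) + (real n)^2*(p*(1-p)^(n-2)) +
     (real n)^2*(p*((1-p+p^2)^(n-2) - (1-p)^(n-2)) +
          (1-p)*((1-p+p^2)^(n-2) - (1-p)^(n-2) - real (n-2)*p^2*(1-p)^(n-2-1)))
     \<le> 21*exp(-w) + 51000*ln (real n)^3/real n + 6/real n"
proof -
  define N where "N = real n"
  define L where "L = ln N"
  define m where "m = n - 2"
  define R where "R = (1-p)^m"
  define y where "y = p^2/(1-p)"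
  define Q where "Q = (1-p+p^2)^m"
  define X where "X = N * p"
  have N3: "3 \<le> N" using n3 unfolding N_def by simp
  have Npos: "0 < N" using N3 by simp
  have L1': "1 \<le> L" using L1 unfolding L_def N_def .
  have mN: "real m = N - 2" using n3 unfolding m_def N_def by simp
  have q: "1/2 \<le> 1 - p" "0 < 1 - p" using p by auto
  have R0: "0 \<le> R" using q unfolding R_def by simp
  have y0: "0 \<le> y" unfolding y_def using q by simp
  have Xpos: "0 \<le> X" unfolding X_def using Npos p by simp
  obtain k where k: "n = 3 + k" using le_Suc_ex[OF n3] by blast
  have e1: "(1-p)^(n-1) = (1-p)*R" unfolding R_def m_def k by (simp add: numeral_eq_Suc)
  have e2: "real (n-2)*p^2*(1-p)^(n-2-1) = real m * R * y"
  proof -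
    have "R = (1-p)*(1-p)^(m-1)" unfolding R_def m_def k by (simp add: numeral_eq_Suc)
    then have "R * y = (1-p)*(1-p)^(m-1)*(p^2/(1-p))" unfolding y_def by simp
    also have "\<dots> = (1-p)^(m-1) * p^2" using q by simp
    finally have "R * y = (1-p)^(m-1) * p^2" .
    then show ?thesis unfolding m_def by simp
  qed
  have e3: "Q = R * (1+y)^m"
  proof -
    have "1-p+p^2 = (1-p)*(1+y)" unfolding y_def using q by (simp add: field_simps)
    then show ?thesis unfolding Q_def R_def by (simp add: power_mult_distrib)
  qed
  have LHS: "n*(1-p)^(n-1) + (real n)^2*(p*(1-p)^(n-2)) +
     (real n)^2*(p*((1-p+p^2)^(n-2) - (1-p)^(n-2)) +
          (1-p)*((1-p+p^2)^(n-2) - (1-p)^(n-2) - real (n-2)*p^2*(1-p)^(n-2-1)))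
     = N*(1-p)*R + N^2*(p*R) + N^2*(p*(Q - R) + (1-p)*(Q - R - real m * R * y))"
    unfolding e1 e2 by (simp add: N_def R_def Q_def m_def mult.assoc)
  have RHS: "21*exp(-w) + 51000*ln (real n)^3/real n + 6/real n = 21*exp(-w) + 51000*L^3/N + 6/N"
    unfolding L_def N_def ..
  have main: "N*(1-p)*R + N^2*(p*R) + N^2*(p*(Q - R) + (1-p)*(Q - R - real m * R * y)) \<le> 21*exp(-w) + 51000*L^3/N + 6/N"
  proof (cases "6 * L \<le> X")
    case True
    have Qb: "Q \<le> 2 / N^3"
    proof -
      have pp: "p*p \<le> p*(1/2)" by (rule mult_left_mono) (use p in auto)
      have a: "1-p+p^2 \<le> 1 - p/2" using pp by (simp add: power2_eq_square)
      have a0: "0 \<le> 1-p+p^2" using q by (simp add: add_nonneg_nonneg)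
      have "Q \<le> (1 - p/2)^m" unfolding Q_def by (rule power_mono[OF a a0])
      also have "\<dots> \<le> exp (- (p/2 * real m))" by (rule H1) (use p in auto)
      also have "\<dots> \<le> exp (1/2 - 3*L)"
      proof -
        have "p * real m = X - 2*p" unfolding mN X_def by (simp add: algebra_simps)
        then have "- (p/2 * real m) \<le> 1/2 - 3*L" using True p by linarith
        then show ?thesis by simp
      qed
      also have "\<dots> = exp (1/2) / N^3"
      proof -
        have "exp (3*L) = exp L ^ 3" using exp_of_nat_mult[of 3 L] by simp
        also have "\<dots> = N^3" unfolding L_def using Npos by simp
        finally have "exp (3*L) = N^3" .
        then show ?thesis by (simp add: exp_diff)
      qed
      also have "\<dots> \<le> 2 / N^3"
      proof -
        have "exp (1/2::real) * exp (1/2) = exp 1" by (simp flip: exp_add)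
        then have "exp (1/2::real) \<le> 2"
        proof -
          assume eq: "exp (1/2::real) * exp (1/2) = exp 1"
          show ?thesis
          proof (rule ccontr)
            assume "\<not> exp (1/2::real) \<le> 2"
            then have "2*2 < exp (1/2::real) * exp (1/2)" by (intro mult_strict_mono) auto
            then show False using exp_le eq by simp
          qed
        qed
        then show ?thesis using Npos by (simp add: divide_right_mono)
      qed
      finally show ?thesis .
    qed
    have ym: "1 \<le> (1+y)^m" by (rule one_le_power) (use y0 in simp)
    have RQ: "R \<le> Q" unfolding e3 using mult_left_mono[OF ym R0] by simp
    have NN: "N \<le> N^2" using N3 by (simp add: power2_eq_square)
    have t1: "N*(1-p)*R \<le> N^2*Q"
    proof -
      have "N*(1-p)*R \<le> N*R" using Npos R0 p by (simp add: mult_left_le_one_le mult_le_cancel_left1 mult.assoc)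
      also have "\<dots> \<le> N^2*Q" by (rule mult_mono[OF NN RQ]) (use Npos R0 in auto)
      finally show ?thesis .
    qed
    have t2: "N^2*(p*R) \<le> N^2*Q"
    proof (rule mult_left_mono)
      have "p*R \<le> 1*R" by (rule mult_right_mono) (use p R0 in auto)
      then show "p*R \<le> Q" using RQ by simp
    qed simp
    have t34: "N^2*(p*(Q - R) + (1-p)*(Q - R - real m * R * y)) \<le> N^2*Q"
    proof (rule mult_left_mono)
      have "0 \<le> (1-p) * (real m * R * y)" using q R0 y0 by simp
      moreover have "0 \<le> R" by (rule R0)
      ultimately show "p*(Q - R) + (1-p)*(Q - R - real m * R * y) \<le> Q" by (simp add: algebra_simps)
    qed simp
    have "N*(1-p)*R + N^2*(p*R) + N^2*(p*(Q - R) + (1-p)*(Q - R - real m * R * y)) \<le> 3 * N^2 * Q"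
      using t1 t2 t34 by linarith
    also have "\<dots> \<le> 3 * N^2 * (2/N^3)" by (rule mult_left_mono[OF Qb]) simp
    also have "\<dots> = 6 / N" using Npos by (simp add: field_simps power3_eq_cube power2_eq_square)
    finally have fin: "N*(1-p)*R + N^2*(p*R) + N^2*(p*(Q - R) + (1-p)*(Q - R - real m * R * y)) \<le> 6 / N" .
    have "0 \<le> 21*exp(-w)" by simp
    moreover have "0 \<le> 51000*L^3/N" using L1' Npos by simp
    ultimately show ?thesis using fin by linarith
  next
    case False
    have XL: "X \<le> 6*L" using False by simp
    have L0: "0 < L" using L1' by simp
    have xL: "L + ln L + w \<le> X" using x unfolding X_def L_def N_def .
    have expx: "exp (-X) \<le> exp (-w) / (N*L)"
    proof -
      have "exp (-X) \<le> exp (-(L + ln L + w))" using xL by simp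
      also have "\<dots> = exp (-w) / (exp L * exp (ln L))"
      proof -
        have "exp (-(L + ln L + w)) * (exp L * exp (ln L)) = exp (-(L + ln L + w) + (L + ln L))"
          by (simp only: exp_add)
        also have "-(L + ln L + w) + (L + ln L) = -w" by simp
        finally show ?thesis by (simp add: eq_divide_eq)
      qed
      also have "\<dots> = exp (-w) / (N*L)" using L0 Npos unfolding L_def by simp
      finally show ?thesis .
    qed
    have Rb: "R \<le> 3*exp(-w)/(N*L)"
    proof -
      have "R \<le> exp (- (p * real m))" unfolding R_def by (rule H1) (use p in auto)
      also have "\<dots> \<le> exp (1 - X)"
      proof -
        have "p * real m = X - 2*p" unfolding mN X_def by (simp add: algebra_simps)
        then show ?thesis using p by simp
      qed
      also have "\<dots> = exp 1 * exp (-X)" by (simp flip: exp_add)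
      also have "\<dots> \<le> 3 * (exp (-w) / (N*L))" by (rule mult_mono[OF exp_le expx]) auto
      finally show ?thesis by simp
    qed
    have ew: "exp (-w) \<le> 1" using w by simp
    have Rb': "R \<le> 3/(N*L)"
    proof -
      have "3*exp(-w)/(N*L) \<le> 3*1/(N*L)" by (rule divide_right_mono) (use ew Npos L0 in auto)
      then show ?thesis using Rb by simp
    qed
    have yb: "y \<le> 2*p^2"
    proof -
      have "p^2 * 1 \<le> p^2 * (2*(1-p))" by (rule mult_left_mono) (use q in auto)
      then have "p^2 \<le> 2*p^2*(1-p)" by (simp add: algebra_simps)
      then show ?thesis unfolding y_def using q by (simp add: divide_le_eq)
    qed
    have myb: "real m * y \<le> 2*X^2/N"
    proof -
      have "real m * y \<le> N * (2*p^2)" by (rule mult_mono) (use mN yb y0 Npos in auto)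
      also have "\<dots> = 2*X^2/N" unfolding X_def using Npos by (simp add: field_simps power2_eq_square)
      finally show ?thesis .
    qed
    have my0: "0 \<le> real m * y" using y0 by simp
    have X2: "X^2 \<le> 36*L^2"
    proof -
      have "X^2 \<le> (6*L)^2" by (rule power_mono[OF XL Xpos])
      then show ?thesis by (simp add: power_mult_distrib)
    qed
    have myb1: "2*X^2/N \<le> 1"
    proof -
      have "2*X^2 \<le> 72*L^2" using X2 by simp
      also have "\<dots> \<le> N" using big unfolding L_def N_def .
      finally show ?thesis using Npos by simp
    qed
    have Eb: "(1+y)^m \<le> 3"
    proof -
      have "(1+y)^m \<le> exp (real m * y)" by (rule pow_exp_bound) (use y0 in simp)
      also have "\<dots> \<le> exp 1" using myb myb1 by simp
      finally show ?thesis using exp_le by linarith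
    qed
    have E0: "0 \<le> (1+y)^m" using y0 by simp
    have t1: "N*(1-p)*R \<le> 3*exp(-w)"
    proof -
      have "(1-p)*R \<le> R" using mult_right_mono[of "1-p" 1 R] p R0 by simp
      then have "N*(1-p)*R \<le> N*R" using mult_left_mono[of "(1-p)*R" R N] Npos by (simp add: mult.assoc)
      also have "\<dots> \<le> N*(3*exp(-w)/(N*L))" by (rule mult_left_mono[OF Rb]) (use Npos in simp)
      also have "\<dots> = 3*exp(-w)/L" using Npos by simp
      also have "\<dots> \<le> 3*exp(-w)/1" by (rule divide_left_mono) (use L1' in auto)
      finally show ?thesis by simp
    qed
    have t2: "N^2*(p*R) \<le> 18*exp(-w)"
    proof -
      have "N^2*(p*R) = N*(X*R)" unfolding X_def by (simp add: power2_eq_square)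
      also have "\<dots> \<le> N*((6*L)*(3*exp(-w)/(N*L)))"
        by (intro mult_left_mono mult_mono XL Rb) (use Npos R0 L0 in auto)
      also have "\<dots> = 18*exp(-w)" using Npos L0 by simp
      finally show ?thesis .
    qed
    have t3: "N^2*(p*(Q-R)) \<le> 3888*L^3/N"
    proof -
      have d3: "(1+y)^m - 1 \<le> (2*X^2/N)*3"
      proof -
        have "(1+y)^m - 1 \<le> real m * y * (1+y)^m" by (rule H3[OF y0])
        also have "\<dots> \<le> (2*X^2/N)*3" by (rule mult_mono[OF myb Eb]) (use my0 myb E0 in auto)
        finally show ?thesis .
      qed
      have "N^2*(p*(Q-R)) = (N^2*p*R)*((1+y)^m - 1)" unfolding e3 by (simp add: algebra_simps)
      also have "\<dots> \<le> (N^2*p*R)*((2*X^2/N)*3)" by (rule mult_left_mono[OF d3]) (use p R0 in simp)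
      also have "\<dots> = 6*X^3*R" unfolding X_def using Npos by (simp add: field_simps power2_eq_square power3_eq_cube)
      also have "\<dots> \<le> 6*(6*L)^3*(3/(N*L))"
        by (intro mult_left_mono mult_mono power_mono XL Rb') (use Xpos Npos L0 R0 in auto)
      also have "\<dots> = 3888*L^2/N" using Npos L0 by (simp add: field_simps power2_eq_square power3_eq_cube)
      also have "\<dots> \<le> 3888*L^3/N"
      proof -
        have "L^2 \<le> L^3" using L1' by (simp add: power_increasing)
        then show ?thesis using Npos by (simp add: divide_right_mono)
      qed
      finally show ?thesis .
    qed
    have t4: "N^2*((1-p)*(Q - R - real m * R * y)) \<le> 46656*L^3/N"
    proof -
      have d4: "(1+y)^m - 1 - real m * y \<le> (2*X^2/N)^2*3"
      proof -
        have "(1+y)^m - 1 - real m * y \<le> (real m * y)^2 * (1+y)^m" by (rule H4[OF y0])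
        also have "\<dots> \<le> (2*X^2/N)^2*3" by (intro mult_mono power_mono myb Eb my0) (use E0 in auto)
        finally show ?thesis .
      qed
      have d40: "0 \<le> (1+y)^m - 1 - real m * y"
      proof -
        have "1 + real m * y \<le> (1+y)^m" using Bernoulli_inequality[of y m] y0 by simp
        then show ?thesis by simp
      qed
      have "N^2*((1-p)*(Q - R - real m * R * y)) = (N^2*R)*((1-p)*((1+y)^m - 1 - real m * y))" unfolding e3 by (simp add: algebra_simps)
      also have "\<dots> \<le> (N^2*R)*(1*((2*X^2/N)^2*3))"
        by (intro mult_left_mono mult_mono d4) (use p R0 d40 in auto)
      also have "\<dots> = 12*X^4*R" unfolding X_def using Npos by (simp add: field_simps power2_eq_square power4_eq_xxxx)
      also have "\<dots> \<le> 12*(6*L)^4*(3/(N*L))"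
        by (intro mult_left_mono mult_mono power_mono XL Rb') (use Xpos Npos L0 R0 in auto)
      also have "\<dots> = 46656*L^3/N" using Npos L0 by (simp add: field_simps power3_eq_cube power4_eq_xxxx)
      finally show ?thesis .
    qed
    have "0 \<le> 6/N" using Npos by simp
    moreover have "3888*L^3/N + 46656*L^3/N \<le> 51000*L^3/N"
    proof -
      have "0 \<le> L^3/N" using L0 Npos by simp
      then have "3888*(L^3/N) + 46656*(L^3/N) \<le> 51000*(L^3/N)" by linarith
      then show ?thesis by simp
    qed
    moreover have "N^2*(p*(Q - R) + (1-p)*(Q - R - real m * R * y)) = N^2*(p*(Q-R)) + N^2*((1-p)*(Q - R - real m*R*y))"
      by (simp only: distrib_left)
    ultimately show ?thesis using t1 t2 t3 t4 by linarith
  qed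
  show ?thesis unfolding LHS RHS by (rule main)
qed



theorem theorem2p13:
  fixes \<omega>1 \<omega>2 p :: "nat \<Rightarrow> real"
  assumes "filterlim \<omega>1 at_top sequentially"
    and "filterlim \<omega>2 at_top sequentially"
    and "eventually (\<lambda>n. (ln n + ln (ln n) + \<omega>1 n) / n < p n \<and>
                          p n < 1 - (ln n + ln (ln n) + \<omega>2 n) / n) sequentially"
  shows "(\<lambda>n. gnp_prob n (p n) (\<lambda>E. \<not> has_domination_pair n E)) \<longlonglongrightarrow> 1"
proof -
  define w where "w n = min (\<omega>1 n) (\<omega>2 n)" for n
  define B where "B n = 21*exp(-w n) + 51000*ln (real n)^3/real n + 6/real n" for n
  have wlim: "filterlim w at_top sequentially"
    unfolding filterlim_at_top
  proof
    fix Z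
    have "eventually (\<lambda>n. Z \<le> \<omega>1 n) sequentially" using assms(1) unfolding filterlim_at_top by blast
    moreover have "eventually (\<lambda>n. Z \<le> \<omega>2 n) sequentially" using assms(2) unfolding filterlim_at_top by blast
    ultimately show "eventually (\<lambda>n. Z \<le> w n) sequentially"
      by eventually_elim (simp add: w_def)
  qed
  have "filterlim (\<lambda>n. - w n) at_bot sequentially"
    using wlim by (simp add: filterlim_uminus_at_bot)
  then have elim: "(\<lambda>n. exp (- w n)) \<longlonglongrightarrow> 0"
    by (rule filterlim_compose[OF exp_at_bot])
  have l2: "(\<lambda>n. 51000*ln (real n)^3/real n) \<longlonglongrightarrow> 0" by real_asymp
  have l3: "(\<lambda>n. 6/real n) \<longlonglongrightarrow> 0" by real_asymp
  have Blim: "B \<longlonglongrightarrow> 0"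
    unfolding B_def using tendsto_add[OF tendsto_add[OF tendsto_mult_right_zero[OF elim] l2] l3]
    by simp
  have ev1: "eventually (\<lambda>n. 1 \<le> ln (real n)) sequentially" by real_asymp
  have ev2: "eventually (\<lambda>n. 72 * ln (real n)^2 \<le> real n) sequentially" by real_asymp
  have ev3: "eventually (\<lambda>n. 3 \<le> n) sequentially" by (rule eventually_ge_at_top)
  have ev4: "eventually (\<lambda>n. 0 \<le> w n) sequentially" using wlim unfolding filterlim_at_top by blast
  have evB: "eventually (\<lambda>n. 1 - B n \<le> gnp_prob n (p n) (\<lambda>E. \<not> has_domination_pair n E) \<and>
      gnp_prob n (p n) (\<lambda>E. \<not> has_domination_pair n E) \<le> 1) sequentially"
    using assms(3) ev1 ev2 ev3 ev4
  proof eventually_elim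
    case (elim n)
    define N where "N = real n"
    define L where "L = ln N"
    define q where "q = min (p n) (1 - p n)"
    have N3: "3 \<le> N" using elim unfolding N_def by simp
    have L1: "1 \<le> L" using elim unfolding L_def N_def by simp
    have lL: "0 \<le> ln L" using L1 by simp
    have w1: "w n \<le> \<omega>1 n" "w n \<le> \<omega>2 n" unfolding w_def by auto
    have num1: "0 \<le> L + ln L + \<omega>1 n" "0 \<le> L + ln L + \<omega>2 n" using L1 lL w1 elim(5) by linarith+
    have h1: "(L + ln L + \<omega>1 n) / N < p n" "p n < 1 - (L + ln L + \<omega>2 n) / N"
      using elim(1) unfolding L_def N_def by auto
    have p0: "0 < p n" using h1(1) num1(1) N3 by (smt (verit) divide_nonneg_pos)
    have p1: "0 < 1 - p n" using h1(2) num1(2) N3 by (smt (verit) divide_nonneg_pos)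
    have q0: "0 < q" "q \<le> 1/2" unfolding q_def using p0 p1 by (auto simp: min_def)
    have xq: "L + ln L + w n \<le> N * q"
    proof (cases "q = p n")
      case True
      have "L + ln L + \<omega>1 n < N * p n" using h1(1) N3 by (simp add: divide_less_eq mult.commute)
      then show ?thesis using w1 unfolding True by linarith
    next
      case False
      then have qq: "q = 1 - p n" unfolding q_def by linarith
      have "(L + ln L + \<omega>2 n) / N < 1 - p n" using h1(2) by linarith
      then have "L + ln L + \<omega>2 n < N * (1 - p n)" using N3 by (simp add: divide_less_eq mult.commute)
      then show ?thesis using w1 unfolding qq by linarith
    qed
    have sym: "gnp_prob n (p n) (has_domination_pair n) = gnp_prob n q (has_domination_pair n)"
    proof (cases "q = p n")
      case True then show ?thesis by simp
    next
      case False
      then have qq: "q = 1 - p n" unfolding q_def by linarith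
      show ?thesis unfolding qq by (rule gnp_prob_sym)
    qed
    have bad: "gnp_prob n (p n) (has_domination_pair n) \<le> B n"
    proof -
      have "gnp_prob n q (has_domination_pair n) \<le> n*(1-q)^(n-1) + (real n)^2*(q*(1-q)^(n-2)) +
         (real n)^2*(q*((1-q+q^2)^(n-2) - (1-q)^(n-2)) +
          (1-q)*((1-q+q^2)^(n-2) - (1-q)^(n-2) - real (n-2)*q^2*(1-q)^(n-2-1)))"
        by (rule bad_bound) (use q0 elim(4) in auto)
      also have "\<dots> \<le> B n" unfolding B_def
        by (rule key) (use elim q0 xq in \<open>auto simp: N_def L_def\<close>)
      finally show ?thesis using sym by simp
    qed
    have bad0: "0 \<le> gnp_prob n (p n) (has_domination_pair n)"
      by (rule gnp_prob_nonneg) (use p0 p1 in auto)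
    show ?case unfolding gnp_prob_compl using bad bad0 by linarith
  qed
  show ?thesis
  proof (rule tendsto_sandwich[of "\<lambda>n. 1 - B n" _ _ "\<lambda>n. 1"])
    show "eventually (\<lambda>n. 1 - B n \<le> gnp_prob n (p n) (\<lambda>E. \<not> has_domination_pair n E)) sequentially"
      using evB by (rule eventually_mono) simp
    show "eventually (\<lambda>n. gnp_prob n (p n) (\<lambda>E. \<not> has_domination_pair n E) \<le> 1) sequentially"
      using evB by (rule eventually_mono) simp
    show "(\<lambda>n. 1 - B n) \<longlonglongrightarrow> 1" using tendsto_diff[OF tendsto_const Blim, of 1] by simp
  qed simp
qed


end
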